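(* For every $\sigma\in\mathcal{SC}$, $\sigma\sim\mathrm{mcl}(\sigma)$.
   Context: Contract terms over base types $BT$ and labels $\mathcal L$: $\sigma::=\mathbf 1\mid ?\mathtt t.\sigma\mid !\mathtt t.\sigma\mid !(\sigma).\sigma\mid ?(\sigma).\sigma\mid \sum_{i\in I}?l_i.\sigma_i\mid \bigoplus_{i\in I}!l_i.\sigma_i\mid \mu x.\sigma\mid x$ ($I$ finite nonempty, labels distinct). $\mathcal{SC}$ = closed guarded terms. Actions $\mathsf{Act}=\{?l,!l\}\cup\{?\mathtt t,!\mathtt t\}\cup\{?(\sigma),!(\sigma):\sigma\in\mathcal{SC}\}$. LTS: $\mathbf 1\xrightarrow\checkmark$; $\lambda.\sigma\xrightarrow\lambda\sigma$ for prefixes (including $!l.\sigma$); $\bigoplus_{i\in I}!l_i.\sigma_i\xrightarrow\tau!l_i.\sigma_i$ for $|I|>1$; $\sum ?l_i.\sigma_i\xrightarrow{?l_i}\sigma_i$; $\mu x.\sigma\xrightarrow\tau\sigma[\mu x.\sigma/x]$. Strong bisimilarity $\sim$: largest $R$ such that $\sigma_1R\sigma_2$ implies $\sigma_1\xrightarrow\checkmark$ iff $\sigma_2\xrightarrow\checkmark$, and for each $\mu\in\mathsf{Act}\cup\{\tau\}$ every $\sigma_1\xrightarrow\mu\sigma_1'$ is matched by some $\sigma_2\xrightarrow\mu\sigma_2'$ with $\sigma_1'R\sigma_2'$ and vice versa. A substitution $s$ is a finite partial map from variables to $\mathcal{SC}$, applied to free occurrences. $\mathrm{mclo}(\sigma,s)$: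 $\mathbf 1\mapsto\mathbf 1$; $x\mapsto x$; $!(\sigma^m).\sigma'\mapsto!(\sigma^m s).\mathrm{mclo}(\sigma',s)$; $?(\sigma^m).\sigma'\mapsto?(\sigma^m s).\mathrm{mclo}(\sigma',s)$; base-type prefixes and sums are mapped componentwise (keeping prefixes); $\mu x.\sigma'\mapsto\mu x.\mathrm{mclo}(\sigma',s')$ where $s'$ maps $x$ to $(\mu x.\sigma')s$ and agrees with $s$ elsewhere. $\mathrm{mcl}(\sigma)=\mathrm{mclo}(\sigma,\varepsilon)$ with $\varepsilon$ the empty substitution. *)

theory Defs
  imports Main
begin

(* Session contract terms.  'b = base types BT, 'l = labels, 'v = recursion variables.
   Sums / internal choices are lists of (label, continuation) pairs; well-formedness
   (nonempty, distinct labels) is part of the predicate SC below. *)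
datatype ('b, 'l, 'v) sterm =
    End
  | InT 'b "('b, 'l, 'v) sterm"
  | OutT 'b "('b, 'l, 'v) sterm"
  | OutS "('b, 'l, 'v) sterm" "('b, 'l, 'v) sterm"
  | InS "('b, 'l, 'v) sterm" "('b, 'l, 'v) sterm"
  | Branch "('l \<times> ('b, 'l, 'v) sterm) list"
  | Choice "('l \<times> ('b, 'l, 'v) sterm) list"
  | Mu 'v "('b, 'l, 'v) sterm"
  | Var 'v

primrec fv :: "('b, 'l, 'v) sterm \<Rightarrow> 'v set" where
  "fv End = {}"
| "fv (InT t s) = fv s"
| "fv (OutT t s) = fv s"
| "fv (OutS m s) = fv m \<union> fv s"
| "fv (InS m s) = fv m \<union> fv s"
| "fv (Branch bs) = \<Union> (snd ` set (map (map_prod id fv) bs))"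
| "fv (Choice bs) = \<Union> (snd ` set (map (map_prod id fv) bs))"
| "fv (Mu x s) = fv s - {x}"
| "fv (Var x) = {x}"

(* guarded_in x s: every free occurrence of x in s lies under a prefix *)
primrec guarded_in :: "'v \<Rightarrow> ('b, 'l, 'v) sterm \<Rightarrow> bool" where
  "guarded_in x End = True"
| "guarded_in x (InT t s) = True"
| "guarded_in x (OutT t s) = True"
| "guarded_in x (OutS m s) = True"
| "guarded_in x (InS m s) = True"
| "guarded_in x (Branch bs) = True"
| "guarded_in x (Choice bs) = True"
| "guarded_in x (Mu y s) = (y = x \<or> guarded_in x s)"
| "guarded_in x (Var y) = (y \<noteq> x)"

primrec guarded :: "('b, 'l, 'v) sterm \<Rightarrow> bool" where
  "guarded End = True"
| "guarded (InT t s) = guarded s"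
| "guarded (OutT t s) = guarded s"
| "guarded (OutS m s) = (guarded m \<and> guarded s)"
| "guarded (InS m s) = (guarded m \<and> guarded s)"
| "guarded (Branch bs) = (\<forall>p\<in>set (map (map_prod id guarded) bs). snd p)"
| "guarded (Choice bs) = (\<forall>p\<in>set (map (map_prod id guarded) bs). snd p)"
| "guarded (Mu x s) = (guarded_in x s \<and> guarded s)"
| "guarded (Var x) = True"

primrec wf :: "('b, 'l, 'v) sterm \<Rightarrow> bool" where
  "wf End = True"
| "wf (InT t s) = wf s"
| "wf (OutT t s) = wf s"
| "wf (OutS m s) = (wf m \<and> wf s)"
| "wf (InS m s) = (wf m \<and> wf s)"
| "wf (Branch bs) = (bs \<noteq> [] \<and> distinct (map fst bs) \<and> (\<forall>p\<in>set (map (map_prod id wf) bs). snd p))"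
| "wf (Choice bs) = (bs \<noteq> [] \<and> distinct (map fst bs) \<and> (\<forall>p\<in>set (map (map_prod id wf) bs). snd p))"
| "wf (Mu x s) = wf s"
| "wf (Var x) = True"

definition SC :: "('b, 'l, 'v) sterm set" where
  "SC = {s. wf s \<and> fv s = {} \<and> guarded s}"

type_synonym ('b, 'l, 'v) subst = "'v \<rightharpoonup> ('b, 'l, 'v) sterm"

primrec apply_subst :: "('b, 'l, 'v) sterm \<Rightarrow> ('b, 'l, 'v) subst \<Rightarrow> ('b, 'l, 'v) sterm" where
  "apply_subst End s = End"
| "apply_subst (InT t u) s = InT t (apply_subst u s)"
| "apply_subst (OutT t u) s = OutT t (apply_subst u s)"
| "apply_subst (OutS m u) s = OutS (apply_subst m s) (apply_subst u s)"
| "apply_subst (InS m u) s = InS (apply_subst m s) (apply_subst u s)"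
| "apply_subst (Branch bs) s = Branch (map (map_prod id (\<lambda>u. apply_subst u s)) bs)"
| "apply_subst (Choice bs) s = Choice (map (map_prod id (\<lambda>u. apply_subst u s)) bs)"
| "apply_subst (Mu x u) s = Mu x (apply_subst u (s(x := None)))"
| "apply_subst (Var x) s = (case s x of Some v \<Rightarrow> v | None \<Rightarrow> Var x)"

primrec mclo :: "('b, 'l, 'v) sterm \<Rightarrow> ('b, 'l, 'v) subst \<Rightarrow> ('b, 'l, 'v) sterm" where
  "mclo End s = End"
| "mclo (InT t u) s = InT t (mclo u s)"
| "mclo (OutT t u) s = OutT t (mclo u s)"
| "mclo (OutS m u) s = OutS (apply_subst m s) (mclo u s)"
| "mclo (InS m u) s = InS (apply_subst m s) (mclo u s)"
| "mclo (Branch bs) s = Branch (map (map_prod id (\<lambda>u. mclo u s)) bs)"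
| "mclo (Choice bs) s = Choice (map (map_prod id (\<lambda>u. mclo u s)) bs)"
| "mclo (Mu x u) s = Mu x (mclo u (s(x \<mapsto> apply_subst (Mu x u) s)))"
| "mclo (Var x) s = Var x"

definition mcl :: "('b, 'l, 'v) sterm \<Rightarrow> ('b, 'l, 'v) sterm" where
  "mcl u = mclo u Map.empty"

datatype ('b, 'l, 'v) lab =
    InL 'l | OutL 'l | InTy 'b | OutTy 'b
  | InM "('b, 'l, 'v) sterm" | OutM "('b, 'l, 'v) sterm"
  | Tau | Tick

fun act_or_tau :: "('b, 'l, 'v) lab \<Rightarrow> bool" where
  "act_or_tau (InM m) = (m \<in> SC)"
| "act_or_tau (OutM m) = (m \<in> SC)"
| "act_or_tau Tick = False"
| "act_or_tau _ = True"

inductive step :: "('b, 'l, 'v) sterm \<Rightarrow> ('b, 'l, 'v) lab \<Rightarrow> ('b, 'l, 'v) sterm \<Rightarrow> bool" where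
  st_end: "step End Tick End"
| st_inT: "step (InT t u) (InTy t) u"
| st_outT: "step (OutT t u) (OutTy t) u"
| st_outS: "step (OutS m u) (OutM m) u"
| st_inS: "step (InS m u) (InM m) u"
| st_outL: "step (Choice [(l, u)]) (OutL l) u"
| st_int: "\<lbrakk>length bs > 1; (l, u) \<in> set bs\<rbrakk> \<Longrightarrow> step (Choice bs) Tau (Choice [(l, u)])"
| st_ext: "(l, u) \<in> set bs \<Longrightarrow> step (Branch bs) (InL l) u"
| st_mu: "step (Mu x u) Tau (apply_subst u [x \<mapsto> Mu x u])"

definition is_bisim :: "(('b, 'l, 'v) sterm \<Rightarrow> ('b, 'l, 'v) sterm \<Rightarrow> bool) \<Rightarrow> bool" where
  "is_bisim R \<longleftrightarrow> (\<forall>s1 s2. R s1 s2 \<longrightarrow>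
      ((\<exists>s1'. step s1 Tick s1') \<longleftrightarrow> (\<exists>s2'. step s2 Tick s2')) \<and>
      (\<forall>a s1'. act_or_tau a \<longrightarrow> step s1 a s1' \<longrightarrow> (\<exists>s2'. step s2 a s2' \<and> R s1' s2')) \<and>
      (\<forall>a s2'. act_or_tau a \<longrightarrow> step s2 a s2' \<longrightarrow> (\<exists>s1'. step s1 a s1' \<and> R s1' s2')))"

definition bisimilar :: "('b, 'l, 'v) sterm \<Rightarrow> ('b, 'l, 'v) sterm \<Rightarrow> bool" (infix "\<sim>\<^sub>b" 50) where
  "s1 \<sim>\<^sub>b s2 \<longleftrightarrow> (\<exists>R. is_bisim R \<and> R s1 s2)"

end

theory Submission
  imports Defs
begin

definition V :: "('b, 'l, 'v) subst \<Rightarrow> 'v set" where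
  "V s = \<Union> (fv ` ran s)"

lemma fv_Branch': "fv (Branch bs) = \<Union> ((\<lambda>p. fv (snd p)) ` set bs)"
  by (simp add: image_image)
lemma fv_Choice': "fv (Choice bs) = \<Union> ((\<lambda>p. fv (snd p)) ` set bs)"
  by (simp add: image_image)

lemma apply_id: "fv t \<inter> dom s = {} \<Longrightarrow> apply_subst t s = t"
proof (induction t arbitrary: s)
  case (Branch bs)
  have "map (map_prod id (\<lambda>u. apply_subst u s)) bs = bs"
  proof (rule map_idI)
    fix p assume p: "p \<in> set bs"
    obtain l u where pe: "p = (l, u)" by (cases p)
    have "fv u \<inter> dom s = {}" using Branch.prems p pe unfolding fv_Branch' by fastforce
    then have "apply_subst u s = u" using Branch.IH[of p u s] p pe by simp
    then show "map_prod id (\<lambda>u. apply_subst u s) p = p" using pe by simp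
  qed
  then show ?case by simp
next
  case (Choice bs)
  have "map (map_prod id (\<lambda>u. apply_subst u s)) bs = bs"
  proof (rule map_idI)
    fix p assume p: "p \<in> set bs"
    obtain l u where pe: "p = (l, u)" by (cases p)
    have "fv u \<inter> dom s = {}" using Choice.prems p pe unfolding fv_Choice' by fastforce
    then have "apply_subst u s = u" using Choice.IH[of p u s] p pe by simp
    then show "map_prod id (\<lambda>u. apply_subst u s) p = p" using pe by simp
  qed
  then show ?case by simp
next
  case (Mu x u)
  have h: "fv u \<inter> dom (s(x:=None)) = {}" using Mu.prems by auto
  show ?case by (simp only: apply_subst.simps Mu.IH[OF h])
next
  case (Var x)
  then show ?case by (auto split: option.splits)
qed auto

lemma fv_apply: "fv (apply_subst t s) \<subseteq> (fv t - dom s) \<union> V s"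
proof (induction t arbitrary: s)
  case (Mu x u)
  have VV: "V (s(x:=None)) \<subseteq> V s" unfolding V_def by (auto simp: ran_def)
  have A: "fv (apply_subst u (s(x:=None))) \<subseteq> fv u - dom (s(x:=None)) \<union> V (s(x:=None))"
    by (rule Mu.IH)
  show ?case
  proof
    fix y assume "y \<in> fv (apply_subst (Mu x u) s)"
    then have y: "y \<in> fv (apply_subst u (s(x:=None)))" "y \<noteq> x" by simp_all
    have "y \<in> fv u - dom (s(x:=None)) \<union> V (s(x:=None))" using A y(1) by (rule subsetD)
    then show "y \<in> fv (Mu x u) - dom s \<union> V s" using y(2) VV by auto
  qed
next
  case (Var x)
  then show ?case by (auto simp: V_def ran_def split: option.splits)
next
  case (Branch bs)
  show ?case
  proof
    fix y assume "y \<in> fv (apply_subst (Branch bs) s)"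
    then obtain l u where lu: "(l, u) \<in> set bs" "y \<in> fv (apply_subst u s)"
      unfolding apply_subst.simps fv_Branch' by auto
    then have "y \<in> (fv u - dom s) \<union> V s" using Branch.IH[of "(l,u)" u s] by auto
    then show "y \<in> (fv (Branch bs) - dom s) \<union> V s" using lu unfolding fv_Branch' by force
  qed
next
  case (Choice bs)
  show ?case
  proof
    fix y assume "y \<in> fv (apply_subst (Choice bs) s)"
    then obtain l u where lu: "(l, u) \<in> set bs" "y \<in> fv (apply_subst u s)"
      unfolding apply_subst.simps fv_Choice' by auto
    then have "y \<in> (fv u - dom s) \<union> V s" using Choice.IH[of "(l,u)" u s] by auto
    then show "y \<in> (fv (Choice bs) - dom s) \<union> V s" using lu unfolding fv_Choice' by force
  qed
next
  case (OutS m u)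
  show ?case using OutS.IH(1)[of s] OutS.IH(2)[of s] by auto
next
  case (InS m u)
  show ?case using InS.IH(1)[of s] InS.IH(2)[of s] by auto
next
  case (OutT b u)
  show ?case using OutT.IH[of s] by auto
next
  case (InT b u)
  show ?case using InT.IH[of s] by auto
qed auto

lemma fv_apply_closed: "\<forall>v\<in>ran s. fv v = {} \<Longrightarrow> fv (apply_subst t s) \<subseteq> fv t - dom s"
  using fv_apply[of t s] by (auto simp: V_def)

lemma fv_mclo: "fv (mclo t s) \<subseteq> fv t \<union> V s"
proof (induction t arbitrary: s)
  case (OutS m u)
  then show ?case using fv_apply[of m s] by auto
next
  case (InS m u)
  then show ?case using fv_apply[of m s] by auto
next
  case (Mu x u)
  let ?w = "apply_subst (Mu x u) s"
  have "V (s(x \<mapsto> ?w)) \<subseteq> V s \<union> fv ?w" unfolding V_def by (auto simp: ran_def)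
  moreover have "fv ?w \<subseteq> fv (Mu x u) \<union> V s" using fv_apply[of "Mu x u" s] by auto
  ultimately have "fv (mclo u (s(x \<mapsto> ?w))) \<subseteq> fv u \<union> V s \<union> fv (Mu x u)"
    using Mu.IH[of "s(x \<mapsto> ?w)"] by blast
  then show ?case by auto
next
  case (Branch bs)
  show ?case
  proof
    fix y assume "y \<in> fv (mclo (Branch bs) s)"
    then obtain l u where lu: "(l, u) \<in> set bs" "y \<in> fv (mclo u s)"
      unfolding mclo.simps fv_Branch' by auto
    then have "y \<in> fv u \<union> V s" using Branch.IH[of "(l,u)" u s] by auto
    then show "y \<in> fv (Branch bs) \<union> V s" using lu unfolding fv_Branch' by force
  qed
next
  case (Choice bs)
  show ?case
  proof
    fix y assume "y \<in> fv (mclo (Choice bs) s)"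
    then obtain l u where lu: "(l, u) \<in> set bs" "y \<in> fv (mclo u s)"
      unfolding mclo.simps fv_Choice' by auto
    then have "y \<in> fv u \<union> V s" using Choice.IH[of "(l,u)" u s] by auto
    then show "y \<in> fv (Choice bs) \<union> V s" using lu unfolding fv_Choice' by force
  qed
qed auto

lemma compose: "\<forall>v\<in>ran s1. fv v = {} \<Longrightarrow> apply_subst (apply_subst t s1) s2 = apply_subst t (s2 ++ s1)"
proof (induction t arbitrary: s1 s2)
  case (Mu x u)
  have r: "\<forall>v\<in>ran (s1(x:=None)). fv v = {}" using Mu.prems by (auto simp: ran_def)
  have eq: "(s2(x:=None)) ++ (s1(x:=None)) = (s2 ++ s1)(x:=None)"
    by (rule ext) (auto simp: map_add_def split: option.splits)
  have "apply_subst (apply_subst (Mu x u) s1) s2 = Mu x (apply_subst (apply_subst u (s1(x:=None))) (s2(x:=None)))"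
    by (simp only: apply_subst.simps)
  also have "\<dots> = Mu x (apply_subst u ((s2(x:=None)) ++ (s1(x:=None))))"
    by (simp only: Mu.IH[OF r])
  also have "\<dots> = apply_subst (Mu x u) (s2 ++ s1)"
    by (simp only: eq apply_subst.simps)
  finally show ?case .
next
  case (Var x)
  show ?case
  proof (cases "s1 x")
    case None
    then show ?thesis by (simp add: map_add_def)
  next
    case (Some v)
    then have "fv v = {}" using Var.prems by (auto simp: ran_def)
    then have "apply_subst v s2 = v" by (intro apply_id) simp
    then show ?thesis using Some by (simp add: map_add_def)
  qed
next
  case (Branch bs)
  have "map (map_prod id (\<lambda>u. apply_subst u s2)) (map (map_prod id (\<lambda>u. apply_subst u s1)) bs)
      = map (map_prod id (\<lambda>u. apply_subst u (s2 ++ s1))) bs"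
    unfolding map_map
  proof (rule map_cong[OF refl])
    fix p assume p: "p \<in> set bs"
    obtain l u where pe: "p = (l, u)" by (cases p)
    show "(map_prod id (\<lambda>u. apply_subst u s2) \<circ> map_prod id (\<lambda>u. apply_subst u s1)) p = map_prod id (\<lambda>u. apply_subst u (s2 ++ s1)) p"
      using Branch.IH[of p u s1 s2] Branch.prems p pe by simp
  qed
  then show ?case by simp
next
  case (Choice bs)
  have "map (map_prod id (\<lambda>u. apply_subst u s2)) (map (map_prod id (\<lambda>u. apply_subst u s1)) bs)
      = map (map_prod id (\<lambda>u. apply_subst u (s2 ++ s1))) bs"
    unfolding map_map
  proof (rule map_cong[OF refl])
    fix p assume p: "p \<in> set bs"
    obtain l u where pe: "p = (l, u)" by (cases p)
    show "(map_prod id (\<lambda>u. apply_subst u s2) \<circ> map_prod id (\<lambda>u. apply_subst u s1)) p = map_prod id (\<lambda>u. apply_subst u (s2 ++ s1)) p"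
      using Choice.IH[of p u s1 s2] Choice.prems p pe by simp
  qed
  then show ?case by simp
qed auto

definition ok where
  "ok t sL sR \<longleftrightarrow> fv t \<subseteq> dom sL \<and> fv t \<subseteq> dom sR \<and> (\<forall>v\<in>ran sL. fv v = {}) \<and> (\<forall>v\<in>ran sR. fv v = {})"

inductive Rel :: "('b, 'l, 'v) sterm \<Rightarrow> ('b, 'l, 'v) sterm \<Rightarrow> bool" where
  rel: "ok t sL sR \<Longrightarrow> (\<And>y. y \<in> fv t \<Longrightarrow> Rel (the (sL y)) (the (sR y)))
     \<Longrightarrow> Rel (apply_subst t sL) (apply_subst (mclo t sL) sR)"

lemma Rel_sub: "ok t sL sR \<Longrightarrow> (\<And>y. y \<in> fv t \<Longrightarrow> Rel (the (sL y)) (the (sR y)))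
  \<Longrightarrow> fv t' \<subseteq> fv t \<Longrightarrow> Rel (apply_subst t' sL) (apply_subst (mclo t' sL) sR)"
  by (rule rel) (auto simp: ok_def)

lemma closedL: "ok t sL sR \<Longrightarrow> fv (apply_subst t sL) = {}"
  using fv_apply_closed[of sL t] by (auto simp: ok_def)

lemma closedR: "ok t sL sR \<Longrightarrow> fv (apply_subst (mclo t sL) sR) = {}"
proof -
  assume a: "ok t sL sR"
  have "V sL = {}" using a by (auto simp: ok_def V_def)
  then have "fv (mclo t sL) \<subseteq> fv t" using fv_mclo[of t sL] by blast
  moreover have "fv (apply_subst (mclo t sL) sR) \<subseteq> fv (mclo t sL) - dom sR"
    using a fv_apply_closed[of sR "mclo t sL"] by (auto simp: ok_def)
  ultimately show ?thesis using a unfolding ok_def by blast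
qed

inductive_simps st_simps:
  "step End a v" "step (InT b u) a v" "step (OutT b u) a v" "step (OutS m u) a v"
  "step (InS m u) a v" "step (Branch bs) a v" "step (Choice bs) a v" "step (Mu x u) a v"
  "step (Var x) a v"

definition P where
  "P L R \<longleftrightarrow> ((\<exists>L'. step L Tick L') \<longleftrightarrow> (\<exists>R'. step R Tick R')) \<and>
     (\<forall>a L'. step L a L' \<longrightarrow> (\<exists>R'. step R a R' \<and> Rel L' R')) \<and>
     (\<forall>a R'. step R a R' \<longrightarrow> (\<exists>L'. step L a L' \<and> Rel L' R'))"

lemma bis: "Rel L R \<Longrightarrow> P L R"
proof (induction rule: Rel.induct)
  case (rel t sL sR)
  have sub: "\<And>t'. fv t' \<subseteq> fv t \<Longrightarrow> Rel (apply_subst t' sL) (apply_subst (mclo t' sL) sR)"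
    using Rel_sub[OF rel(1)] rel(2) by blast
  show ?case
  proof (cases t)
    case End
    then show ?thesis using sub[of End] by (auto simp: P_def st_simps)
  next
    case (InT b u)
    then show ?thesis using sub[of u] by (auto simp: P_def st_simps)
  next
    case (OutT b u)
    then show ?thesis using sub[of u] by (auto simp: P_def st_simps)
  next
    case (OutS m u)
    have "fv (apply_subst m sL) = {}" using closedL[of m sL sR] rel(1) OutS by (auto simp: ok_def)
    then have e: "apply_subst (apply_subst m sL) sR = apply_subst m sL" by (simp add: apply_id)
    then show ?thesis using sub[of u] OutS by (auto simp: P_def st_simps)
  next
    case (InS m u)
    have "fv (apply_subst m sL) = {}" using closedL[of m sL sR] rel(1) InS by (auto simp: ok_def)
    then have e: "apply_subst (apply_subst m sL) sR = apply_subst m sL" by (simp add: apply_id)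
    then show ?thesis using sub[of u] InS by (auto simp: P_def st_simps)
  next
    case (Branch bs)
    have s: "\<And>l u. (l, u) \<in> set bs \<Longrightarrow> Rel (apply_subst u sL) (apply_subst (mclo u sL) sR)"
      using Branch by (intro sub) force
    show ?thesis using Branch s by (fastforce simp: P_def st_simps intro: rev_image_eqI)
  next
    case (Choice bs)
    have s: "\<And>l u. (l, u) \<in> set bs \<Longrightarrow> Rel (apply_subst u sL) (apply_subst (mclo u sL) sR)"
      using Choice by (intro sub) force
    have s2: "\<And>l u. (l, u) \<in> set bs \<Longrightarrow> Rel (apply_subst (Choice [(l,u)]) sL) (apply_subst (mclo (Choice [(l,u)]) sL) sR)"
      using Choice by (intro sub) force
    show ?thesis using Choice s s2 by (fastforce simp: P_def st_simps intro: rev_image_eqI)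
  next
    case (Mu x u)
    define L where "L = apply_subst t sL"
    define R where "R = apply_subst (mclo t sL) sR"
    have RLR: "Rel L R" unfolding L_def R_def using rel(1) rel(2) by (blast intro: Rel.rel)
    have cL: "fv L = {}" using closedL[OF rel(1)] L_def by simp
    have cR: "fv R = {}" using closedR[OF rel(1)] R_def by simp
    let ?sL = "sL(x \<mapsto> L)" and ?sR = "sR(x \<mapsto> R)"
    have okn: "ok u ?sL ?sR" using rel(1) Mu cL cR by (auto simp: ok_def ran_def)
    have Rn: "Rel (apply_subst u ?sL) (apply_subst (mclo u ?sL) ?sR)"
    proof (rule Rel.rel[OF okn])
      fix y assume "y \<in> fv u"
      then show "Rel (the (?sL y)) (the (?sR y))"
        using RLR rel(2) Mu by (cases "y = x") auto
    qed
    have r1: "\<forall>v\<in>ran (sL(x:=None)). fv v = {}" using rel(1) by (auto simp: ok_def ran_def)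
    have r2: "\<forall>v\<in>ran (sR(x:=None)). fv v = {}" using rel(1) by (auto simp: ok_def ran_def)
    have eL: "apply_subst (apply_subst u (sL(x:=None))) [x \<mapsto> L] = apply_subst u ?sL"
      by (simp add: compose[OF r1] map_add_upd_left)
    have eR: "apply_subst (apply_subst (mclo u ?sL) (sR(x:=None))) [x \<mapsto> R] = apply_subst (mclo u ?sL) ?sR"
      by (simp add: compose[OF r2] map_add_upd_left)
    have Lf: "L = Mu x (apply_subst u (sL(x:=None)))" using L_def Mu by simp
    have Rf: "R = Mu x (apply_subst (mclo u ?sL) (sR(x:=None)))" using R_def Mu L_def by simp
    show ?thesis using Rn eL eR unfolding L_def[symmetric] R_def[symmetric] Lf Rf
      by (auto simp: P_def st_simps)
  next
    case (Var x)
    then have "P (the (sL x)) (the (sR x))" using rel(3)[of x] by simp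
    moreover obtain a b where "sL x = Some a" "sR x = Some b" using rel(1) Var by (auto simp: ok_def)
    ultimately show ?thesis using Var by simp
  qed
qed

theorem mainTheorem20:
  fixes \<sigma> :: "('b, 'l, 'v) sterm"
  assumes "\<sigma> \<in> SC"
  shows "\<sigma> \<sim>\<^sub>b mcl \<sigma>"
proof -
  have c: "fv \<sigma> = {}" using assms by (simp add: SC_def)
  have "ok \<sigma> Map.empty Map.empty" using c by (simp add: ok_def)
  then have "Rel (apply_subst \<sigma> Map.empty) (apply_subst (mclo \<sigma> Map.empty) Map.empty)"
    by (rule Rel.rel) (simp add: c)
  then have "Rel \<sigma> (mcl \<sigma>)" by (simp add: apply_id mcl_def)
  moreover have "is_bisim Rel" unfolding is_bisim_def using bis unfolding P_def by blast
  ultimately show ?thesis unfolding bisimilar_def by blast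
qed

end
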